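(* There exist absolute constants $C>0$ and $n_0$ such that for all $n\ge n_0$ and all integers $1\le k\le n/\log n$ with $nk$ even, every random graph $\mathcal G$ on vertex set $[n]$ whose law is supported on the set of $k$-regular simple graphs satisfies $$\mathcal B(\mathcal G)\le C\,kn\log(n/k).$$
   Context: A random graph $\mathcal G$ on $[n]$ is identified with the random vector of edge indicators $(e^{ij})_{1\le i<j\le n}\in\{0,1\}^{\binom n2}$. For a random vector $x=(x^1,\dots,x^m)$ on a finite product set, the dual total correlation is $\mathcal B(x)=\mathcal H(x)-\sum_{i=1}^m\mathcal H(x^i\mid x^{-i})$, with $\mathcal H$ Shannon entropy and $x^{-i}$ the vector with coordinate $i$ removed. *)

theory Defs
  imports "HOL-Probability.Probability_Mass_Function"
begin

definition entropy_pmf :: "'a pmf \<Rightarrow> real" where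
  "entropy_pmf p = - (\<Sum>x\<in>set_pmf p. pmf p x * ln (pmf p x))"

definition cond_entropy_pmf :: "'w pmf \<Rightarrow> ('w \<Rightarrow> 'a) \<Rightarrow> ('w \<Rightarrow> 'b) \<Rightarrow> real" where
  "cond_entropy_pmf p f g =
     (let J = map_pmf (\<lambda>w. (f w, g w)) p; M = map_pmf g p in
      - (\<Sum>xy\<in>set_pmf J. pmf J xy * ln (pmf J xy / pmf M (snd xy))))"

text \<open>A graph on [n] is identified with its edge set E (a subset of these pairs);
  the coordinate e^{ij} is the indicator of (i,j) in E.\<close>
definition vertex_pairs :: "nat \<Rightarrow> (nat \<times> nat) set" where
  "vertex_pairs n = {(i, j). 1 \<le> i \<and> i < j \<and> j \<le> n}"

definition adj :: "(nat \<times> nat) set \<Rightarrow> nat \<Rightarrow> nat \<Rightarrow> bool" where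
  "adj E u v \<longleftrightarrow> (u, v) \<in> E \<or> (v, u) \<in> E"

definition degree :: "nat \<Rightarrow> (nat \<times> nat) set \<Rightarrow> nat \<Rightarrow> nat" where
  "degree n E v = card {u \<in> {1..n}. adj E u v}"

definition regular_graphs :: "nat \<Rightarrow> nat \<Rightarrow> (nat \<times> nat) set set" where
  "regular_graphs n k = {E. E \<subseteq> vertex_pairs n \<and> (\<forall>v\<in>{1..n}. degree n E v = k)}"

text \<open>Dual total correlation of the edge-indicator vector of a random graph on [n]
  with law p: H(x) - sum_e H(x^e | x^{-e}); x^{-e} is represented by E - {e}
  (the restriction of the indicator vector to the other coordinates).\<close>
definition dual_total_corr :: "nat \<Rightarrow> (nat \<times> nat) set pmf \<Rightarrow> real" where
  "dual_total_corr n p =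
     entropy_pmf (map_pmf (\<lambda>E. \<lambda>e\<in>vertex_pairs n. e \<in> E) p)
     - (\<Sum>e\<in>vertex_pairs n.
          cond_entropy_pmf p (\<lambda>E. e \<in> E) (\<lambda>E. \<lambda>e'\<in>vertex_pairs n - {e}. e' \<in> E))"

end

theory Submission
  imports Defs
begin

lemma entropy_le:
  assumes fin: "finite (set_pmf q)"
  shows "entropy_pmf q \<le> ln (card (set_pmf q))"
proof -
  define S where "S = set_pmf q"
  define N where "N = real (card S)"
  have Sne: "S \<noteq> {}" unfolding S_def by (rule set_pmf_not_empty)
  have Npos: "N > 0" using fin Sne unfolding N_def S_def by (simp add: card_gt_0_iff)
  have pos: "\<And>x. x \<in> S \<Longrightarrow> pmf q x > 0" unfolding S_def by (simp add: pmf_positive)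
  have s1: "(\<Sum>x\<in>S. pmf q x) = 1" using sum_pmf_eq_1[OF fin] S_def by simp
  have "(\<Sum>x\<in>S. pmf q x * ln (1 / (pmf q x * N))) \<le> (\<Sum>x\<in>S. pmf q x * (1 / (pmf q x * N) - 1))"
  proof (rule sum_mono)
    fix x assume "x \<in> S"
    hence "pmf q x > 0" by (rule pos)
    thus "pmf q x * ln (1 / (pmf q x * N)) \<le> pmf q x * (1 / (pmf q x * N) - 1)"
      using Npos by (intro mult_left_mono ln_le_minus_one) auto
  qed
  also have "\<dots> = (\<Sum>x\<in>S. 1 / N - pmf q x)"
    apply (rule sum.cong[OF refl]) subgoal for x using pos[of x] Npos by (simp add: field_simps) done
  also have "\<dots> = 0" using s1 Npos unfolding N_def by (simp add: sum_subtractf)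
  finally have A: "(\<Sum>x\<in>S. pmf q x * ln (1 / (pmf q x * N))) \<le> 0" .
  have "(\<Sum>x\<in>S. pmf q x * ln (1 / (pmf q x * N))) = (\<Sum>x\<in>S. - (pmf q x * ln (pmf q x)) - pmf q x * ln N)"
    apply (rule sum.cong[OF refl]) subgoal for x using pos[of x] Npos by (simp add: ln_div ln_mult algebra_simps) done
  also have "\<dots> = entropy_pmf q - ln N"
    unfolding entropy_pmf_def S_def[symmetric] using s1
    by (simp add: sum_subtractf sum_negf flip: sum_distrib_right)
  finally show ?thesis using A unfolding N_def S_def by simp
qed

lemma cond_nonneg: "cond_entropy_pmf p f g \<ge> 0"
proof -
  define J where "J = map_pmf (\<lambda>w. (f w, g w)) p"
  define M where "M = map_pmf g p"
  have MJ: "M = map_pmf snd J" unfolding J_def M_def by (simp add: pmf.map_comp o_def)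
  have "pmf J xy * ln (pmf J xy / pmf M (snd xy)) \<le> 0" if "xy \<in> set_pmf J" for xy
  proof -
    have jp: "pmf J xy > 0" using that by (simp add: pmf_positive)
    have "pmf J xy = measure J {xy}" by (simp add: measure_pmf_single)
    also have "\<dots> \<le> measure J (snd -` {snd xy})"
      by (rule measure_pmf.finite_measure_mono) auto
    also have "\<dots> = pmf M (snd xy)" unfolding MJ by (simp add: pmf_map)
    finally have le: "pmf J xy \<le> pmf M (snd xy)" .
    hence "pmf J xy / pmf M (snd xy) \<le> 1" using jp by (simp add: divide_le_eq_1)
    hence "ln (pmf J xy / pmf M (snd xy)) \<le> 0" using jp le by simp
    thus ?thesis using jp by (simp add: mult_nonneg_nonpos)
  qed
  hence "(\<Sum>xy\<in>set_pmf J. pmf J xy * ln (pmf J xy / pmf M (snd xy))) \<le> 0" by (rule sum_nonpos)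
  thus ?thesis unfolding cond_entropy_pmf_def Let_def J_def[symmetric] M_def[symmetric] by simp
qed

lemma finite_vp: "finite (vertex_pairs n)"
proof -
  have "vertex_pairs n \<subseteq> {1..n} \<times> {1..n}" unfolding vertex_pairs_def by auto
  thus ?thesis by (rule finite_subset) auto
qed

lemma card_reg: "finite (regular_graphs n k) \<and> card (regular_graphs n k) \<le> (n choose k) ^ n"
proof -
  define f where "f E = (\<lambda>v\<in>{1..n}. {u \<in> {1..n}. adj E u v})" for E
  define T where "T = (\<Pi>\<^sub>E v\<in>{1..n}. {S. S \<subseteq> {1..n} \<and> card S = k})"
  have fin: "finite (regular_graphs n k)"
    using finite_vp[of n] unfolding regular_graphs_def
    by (rule finite_subset[rotated, OF finite_Pow_iff[THEN iffD2]]) auto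
  have rec: "E = {(i, j) \<in> vertex_pairs n. i \<in> f E j}" if "E \<in> regular_graphs n k" for E
  proof -
    have sub: "E \<subseteq> vertex_pairs n" using that unfolding regular_graphs_def by auto
    show ?thesis
    proof safe
      fix i j assume "(i, j) \<in> E"
      thus "(i, j) \<in> vertex_pairs n" using sub by auto
      thus "i \<in> f E j" using \<open>(i, j) \<in> E\<close> unfolding f_def adj_def vertex_pairs_def by auto
    next
      fix i j assume "(i, j) \<in> vertex_pairs n" "i \<in> f E j"
      thus "(i, j) \<in> E" using sub unfolding f_def adj_def vertex_pairs_def by (auto split: if_splits)
    qed
  qed
  have inj: "inj_on f (regular_graphs n k)"
  proof (rule inj_onI)
    fix E E' assume a: "E \<in> regular_graphs n k" "E' \<in> regular_graphs n k" "f E = f E'"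
    have "E = {(i, j) \<in> vertex_pairs n. i \<in> f E j}" by (rule rec[OF a(1)])
    also have "\<dots> = {(i, j) \<in> vertex_pairs n. i \<in> f E' j}" by (simp only: a(3))
    also have "\<dots> = E'" by (rule rec[OF a(2), symmetric])
    finally show "E = E'" .
  qed
  have img: "f ` regular_graphs n k \<subseteq> T"
    unfolding T_def f_def regular_graphs_def degree_def by auto
  have "card (regular_graphs n k) = card (f ` regular_graphs n k)" using inj by (simp add: card_image)
  also have "\<dots> \<le> card T" using img by (rule card_mono[rotated]) (simp add: T_def finite_PiE)
  also have "card T = (n choose k) ^ n" unfolding T_def by (simp add: card_PiE n_subsets)
  finally show ?thesis using fin by simp
qed

lemma binom_fact_le: "k \<le> n \<Longrightarrow> (n choose k) * fact k \<le> (n ^ k :: nat)"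
proof -
  assume kn: "k \<le> n"
  have e: "fact k * fact (n - k) * (n choose k) = (fact n :: nat)" by (rule binomial_fact_lemma[OF kn])
  have e2: "fact (n - k) * (fact k * (n choose k)) = (fact n :: nat)"
    using e by (simp only: ac_simps)
  have "fact n div fact (n - k) = fact k * (n choose k)"
    unfolding e2[symmetric] by (rule nonzero_mult_div_cancel_left) simp
  thus ?thesis using fact_div_fact_le_pow[OF kn] by (simp only: ac_simps)
qed

lemma pow_fact_le_exp: "(x::real) \<ge> 0 \<Longrightarrow> x ^ k / fact k \<le> exp x"
proof -
  assume x: "x \<ge> 0"
  have "(\<lambda>n. x^n /\<^sub>R fact n) sums exp x" by (rule exp_converges)
  hence sm: "summable (\<lambda>n. x^n /\<^sub>R fact n)" and eq: "exp x = (\<Sum>n. x^n /\<^sub>R fact n)"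
    by (auto simp: sums_iff)
  have "sum (\<lambda>n. x^n /\<^sub>R fact n) {k} \<le> (\<Sum>n. x^n /\<^sub>R fact n)"
    by (rule sum_le_suminf[OF sm]) (use x in auto)
  thus ?thesis using eq by (simp add: divide_inverse mult.commute)
qed

lemma ln_binom: assumes "1 \<le> k" "k \<le> n" shows "ln (real (n choose k)) \<le> real k * (1 + ln (real n / real k))"
proof -
  have bpos: "n choose k > 0" using assms by simp
  have "real (n choose k) * fact k \<le> real n ^ k"
  proof -
    have "real ((n choose k) * fact k) \<le> real (n ^ k)"
      using binom_fact_le[OF assms(2)] by (rule of_nat_mono)
    thus ?thesis by (simp only: of_nat_mult of_nat_power of_nat_fact)
  qed
  hence "real (n choose k) \<le> real n ^ k / fact k" by (simp add: field_simps)
  also have "\<dots> = (real n / real k) ^ k * (real k ^ k / fact k)"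
    using assms by (simp add: field_simps power_divide)
  also have "\<dots> \<le> (real n / real k) ^ k * exp (real k)"
    by (intro mult_left_mono pow_fact_le_exp) auto
  finally have le: "real (n choose k) \<le> (real n / real k) ^ k * exp (real k)" .
  have "ln (real (n choose k)) \<le> ln ((real n / real k) ^ k * exp (real k))"
    using le bpos assms by (subst ln_le_cancel_iff) auto
  also have "\<dots> = real k * ln (real n / real k) + real k"
    using assms by (simp add: ln_mult ln_realpow)
  finally show ?thesis by (simp add: algebra_simps)
qed

theorem proposition3:
  shows "\<exists>C::real. C > 0 \<and> (\<exists>n0::nat. \<forall>n\<ge>n0. \<forall>k::nat.
           1 \<le> k \<and> real k \<le> real n / ln (real n) \<and> even (n * k) \<longrightarrow>
           (\<forall>p :: (nat \<times> nat) set pmf. set_pmf p \<subseteq> regular_graphs n k \<longrightarrow>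
              dual_total_corr n p \<le> C * real k * real n * ln (real n / real k)))"
proof (intro exI conjI allI impI)
  show "(2::real) > 0" by simp
  fix n k :: nat and p :: "(nat \<times> nat) set pmf"
  assume n: "100 \<le> n"
    and hk: "1 \<le> k \<and> real k \<le> real n / ln (real n) \<and> even (n * k)"
    and sp: "set_pmf p \<subseteq> regular_graphs n k"
  have k1: "1 \<le> k" and kle: "real k \<le> real n / ln (real n)" using hk by auto
  have e3: "exp (3::real) \<le> 27"
  proof -
    have "exp (3::real) = exp 1 ^ 3" using exp_of_nat_mult[of 3 "1::real"] by simp
    also have "\<dots> \<le> 3 ^ 3" by (rule power_mono[OF exp_le]) simp
    finally show ?thesis by simp
  qed
  have ln3: "3 \<le> ln (real n)"
  proof -
    have "(27::real) \<le> real n" using n by simp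
    hence h: "exp 3 \<le> real n" using e3 by linarith
    have "ln (exp 3) \<le> ln (real n)" using h n by (subst ln_le_cancel_iff) auto
    thus ?thesis by (simp only: ln_exp)
  qed
  have lnpos: "ln (real n) > 0" using ln3 by simp
  have kln: "real k * ln (real n) \<le> real n" using kle lnpos by (simp add: field_simps)
  have kn: "k \<le> n"
  proof -
    have "real k \<le> real k * ln (real n)" using ln3 k1 by simp
    thus ?thesis using kln by simp
  qed
  have ratio: "exp 1 \<le> real n / real k"
  proof -
    have "exp 1 \<le> (3::real)" by (rule exp_le)
    also have "\<dots> \<le> ln (real n)" by (rule ln3)
    also have "\<dots> \<le> real n / real k" using kln k1 by (simp add: field_simps)
    finally show ?thesis .
  qed
  have lnr: "1 \<le> ln (real n / real k)"
  proof -
    have "ln (exp 1) \<le> ln (real n / real k)" using ratio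
      by (subst ln_le_cancel_iff) (auto intro: order_less_le_trans[OF exp_gt_zero])
    thus ?thesis by (simp only: ln_exp)
  qed
  define q where "q = map_pmf (\<lambda>E. \<lambda>e\<in>vertex_pairs n. e \<in> E) p"
  have fr: "finite (regular_graphs n k)" and cr: "card (regular_graphs n k) \<le> (n choose k) ^ n"
    using card_reg by auto
  have fp: "finite (set_pmf p)" using fr sp by (rule finite_subset[rotated])
  have fq: "finite (set_pmf q)" unfolding q_def using fp by simp
  have cq: "card (set_pmf q) \<le> (n choose k) ^ n"
  proof -
    have "card (set_pmf q) \<le> card (set_pmf p)" unfolding q_def using fp by (simp add: card_image_le)
    also have "\<dots> \<le> card (regular_graphs n k)" using sp fr by (rule card_mono[rotated])
    finally show ?thesis using cr by simp
  qed
  have cqpos: "card (set_pmf q) > 0" using fq set_pmf_not_empty[of q] by (simp add: card_gt_0_iff)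
  have s0: "0 \<le> (\<Sum>e\<in>vertex_pairs n.
          cond_entropy_pmf p (\<lambda>E. e \<in> E) (\<lambda>E. \<lambda>e'\<in>vertex_pairs n - {e}. e' \<in> E))"
    by (intro sum_nonneg cond_nonneg)
  have "dual_total_corr n p \<le> entropy_pmf q"
    unfolding dual_total_corr_def q_def[symmetric] using s0 by linarith
  also have "\<dots> \<le> ln (real (card (set_pmf q)))" by (rule entropy_le[OF fq])
  also have "\<dots> \<le> ln (real ((n choose k) ^ n))"
    using cq cqpos kn by (subst ln_le_cancel_iff) auto
  also have "\<dots> = real n * ln (real (n choose k))" by (simp add: ln_realpow)
  also have "\<dots> \<le> real n * (real k * (1 + ln (real n / real k)))"
    by (rule mult_left_mono[OF ln_binom[OF k1 kn]]) simp
  also have "\<dots> \<le> real n * (real k * (2 * ln (real n / real k)))"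
    using lnr by (intro mult_left_mono) auto
  also have "\<dots> = 2 * real k * real n * ln (real n / real k)" by simp
  finally show "dual_total_corr n p \<le> 2 * real k * real n * ln (real n / real k)" .
qed

end
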